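(* Let $z\in\mathbb R^d$ satisfy $\|z\|_2=1$ and $\|z\|_\infty\le\mu/\sqrt d$, and let $M=zz^\top$. There are a polynomial $P$ and absolute constants $c_0,C>0$ such that if $0<\epsilon\le c_0$ and $p\ge P(\mu,\log d)/(d\epsilon^2)$ (with $p\le1$), then with probability $1-o(1)$ as $d\to\infty$ over $\Omega$, every local minimum $x$ of $f(x)=\frac12\|P_\Omega(M-xx^\top)\|_F^2$ that lies in $\mathcal B=\{x\in\mathbb R^d:\|x\|_\infty<2\mu/\sqrt d\}$ satisfies $\min(\|x-z\|_2,\|x+z\|_2)\le C\sqrt\epsilon$.
   Context: The random set $\Omega\subseteq[d]\times[d]$ is generated as follows: independently for each unordered pair $\{i,j\}$ (including $i=j$), with probability $p$ both $(i,j)$ and $(j,i)$ are placed in $\Omega$, otherwise neither. $P_\Omega(A)$ is the matrix agreeing with $A$ on entries in $\Omega$ and zero elsewhere; $\|\cdot\|_F$ is the Frobenius norm. *)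

theory Defs
  imports Complex_Main
begin

text \<open>Vectors in R^d are represented as functions nat \<Rightarrow> real; only the
  coordinates i < d are relevant (indices are 0-based: [d] = {0..<d}).\<close>

definition l2norm :: "nat \<Rightarrow> (nat \<Rightarrow> real) \<Rightarrow> real" where
  "l2norm d x = sqrt (\<Sum>i<d. (x i)\<^sup>2)"

definition is_poly2 :: "(real \<Rightarrow> real \<Rightarrow> real) \<Rightarrow> bool" where
  "is_poly2 P \<longleftrightarrow> (\<exists>n::nat. \<exists>c::nat \<Rightarrow> nat \<Rightarrow> real.
      \<forall>a b. P a b = (\<Sum>i\<le>n. \<Sum>j\<le>n. c i j * a ^ i * b ^ j))"

text \<open>Unordered pairs {i,j} (including i = j) of [d], represented as (i,j) with i \<le> j.\<close>
definition upairs :: "nat \<Rightarrow> (nat \<times> nat) set" where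
  "upairs d = {(i, j). i \<le> j \<and> j < d}"

definition symcl :: "(nat \<times> nat) set \<Rightarrow> (nat \<times> nat) set" where
  "symcl S = S \<union> {(j, i) | i j. (i, j) \<in> S}"

text \<open>Probability that the random set Omega satisfies E: each unordered pair is
  chosen independently with probability p, and Omega is the symmetric closure
  of the chosen pairs.\<close>
definition omega_prob :: "nat \<Rightarrow> real \<Rightarrow> ((nat \<times> nat) set \<Rightarrow> bool) \<Rightarrow> real" where
  "omega_prob d p E =
     (\<Sum>S\<in>Pow (upairs d). if E (symcl S)
        then p ^ card S * (1 - p) ^ card (upairs d - S) else 0)"

definition mc_obj :: "nat \<Rightarrow> (nat \<times> nat) set \<Rightarrow> (nat \<Rightarrow> real) \<Rightarrow> (nat \<Rightarrow> real) \<Rightarrow> real" where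
  "mc_obj d \<Omega> z x =
     (1/2) * (\<Sum>(i,j)\<in>\<Omega> \<inter> ({..<d} \<times> {..<d}). (z i * z j - x i * x j)\<^sup>2)"

definition local_min_d :: "nat \<Rightarrow> ((nat \<Rightarrow> real) \<Rightarrow> real) \<Rightarrow> (nat \<Rightarrow> real) \<Rightarrow> bool" where
  "local_min_d d g x \<longleftrightarrow>
     (\<exists>r>0. \<forall>y. l2norm d (\<lambda>i. x i - y i) < r \<longrightarrow> g x \<le> g y)"

end

theory Submission
  imports Defs "HOL-Real_Asymp.Real_Asymp"
begin


lemma exp_le_quad: fixes y::real assumes "\<bar>y\<bar> \<le> 1" shows "exp y \<le> 1 + y + y\<^sup>2"
proof (cases "y \<ge> 0")
  case True then show ?thesis using exp_bound[of y] assms by auto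
next
  case False
  define u where "u = -y"
  have u: "0 < u" "u \<le> 1" using False assms by (auto simp: u_def)
  have "exp (u/2) \<ge> 1 + u/2" by (rule exp_ge_add_one_self)
  hence "exp (u/2) * exp (u/2) \<ge> (1+u/2)*(1+u/2)" using u by (intro mult_mono) auto
  hence e: "exp u \<ge> (1+u/2)*(1+u/2)" by (simp add: exp_add[symmetric])
  have p: "1 - u + u\<^sup>2 > 0" proof - have "u*u > 0" using u by simp
    thus ?thesis using u unfolding power2_eq_square by linarith qed
  have "(1 - u + u\<^sup>2) * exp u \<ge> (1 - u + u\<^sup>2) * ((1+u/2)*(1+u/2))"
    using e p by (intro mult_left_mono) auto
  moreover have "(1 - u + u\<^sup>2) * ((1+u/2)*(1+u/2)) = 1 + u^2/4 + 3*u^3/4 + u^4/4"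
    by (simp add: power2_eq_square power3_eq_cube power4_eq_xxxx field_simps)
  moreover have "1 + u^2/4 + 3*u^3/4 + u^4/4 \<ge> 1" using u by simp
  ultimately have "(1 - u + u\<^sup>2) * exp u \<ge> 1" by linarith
  hence "1 - u + u\<^sup>2 \<ge> 1 / exp u" by (simp add: field_simps)
  thus ?thesis by (simp add: u_def exp_minus divide_inverse power2_eq_square)
qed

lemma mgf_factor:
  fixes p a :: real assumes p: "0 \<le> p" "p \<le> 1" and a: "\<bar>a\<bar> \<le> 1"
  shows "p * exp (a*(1-p)) + (1-p) * exp (-(a*p)) \<le> exp (a\<^sup>2 * p)"
proof -
  have a1: "\<bar>a*(1-p)\<bar> \<le> 1" using p a by (simp add: abs_mult) (rule mult_le_one, auto)
  have a2: "\<bar>-(a*p)\<bar> \<le> 1" using p a by (simp add: abs_mult) (rule mult_le_one, auto)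
  have "p * exp (a*(1-p)) \<le> p * (1 + a*(1-p) + (a*(1-p))\<^sup>2)"
    using exp_le_quad[OF a1] p by (intro mult_left_mono) auto
  moreover have "(1-p) * exp (-(a*p)) \<le> (1-p) * (1 + -(a*p) + (-(a*p))\<^sup>2)"
    using exp_le_quad[OF a2] p by (intro mult_left_mono) auto
  moreover have "p * (1 + a*(1-p) + (a*(1-p))\<^sup>2) + (1-p) * (1 + -(a*p) + (-(a*p))\<^sup>2)
      = 1 + a\<^sup>2 * p * (1-p)" by (simp add: power2_eq_square algebra_simps)
  moreover have "a\<^sup>2 * p * (1-p) \<le> a\<^sup>2 * p" using p by (simp add: mult_left_le)
  moreover have "1 + a\<^sup>2 * p \<le> exp (a\<^sup>2 * p)" by (rule exp_ge_add_one_self)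
  ultimately show ?thesis by linarith
qed

lemma mgf_bound:
  fixes c :: "'a \<Rightarrow> real"
  assumes U: "finite U" and p: "0 \<le> p" "p \<le> 1" and c: "\<forall>e\<in>U. \<bar>l * c e\<bar> \<le> 1"
  shows "(\<Sum>S\<in>Pow U. p ^ card S * (1-p) ^ card (U - S) *
            exp (l * ((\<Sum>e\<in>S. c e) - p * (\<Sum>e\<in>U. c e))))
         \<le> exp ((l\<^sup>2 * p) * (\<Sum>e\<in>U. (c e)\<^sup>2))"
proof -
  define f1 where "f1 e = p * exp (l * c e * (1-p))" for e
  define f2 where "f2 e = (1-p) * exp (-(l * c e * p))" for e
  have eq: "p ^ card S * (1-p) ^ card (U - S) * exp (l * ((\<Sum>e\<in>S. c e) - p * (\<Sum>e\<in>U. c e)))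
      = (\<Prod>e\<in>S. f1 e) * (\<Prod>e\<in>U-S. f2 e)" if "S \<in> Pow U" for S
  proof -
    have SU: "S \<subseteq> U" and fS: "finite S" using that U by (auto intro: finite_subset)
    have sU: "(\<Sum>e\<in>U. c e) = (\<Sum>e\<in>S. c e) + (\<Sum>e\<in>U-S. c e)"
      using sum.subset_diff[OF SU U] by (simp add: add.commute)
    have "l * ((\<Sum>e\<in>S. c e) - p * (\<Sum>e\<in>U. c e)) = (\<Sum>e\<in>S. l * c e * (1-p)) + (\<Sum>e\<in>U-S. -(l * c e * p))"
      unfolding sU by (simp add: sum_distrib_left sum_distrib_right sum_negf algebra_simps sum_subtractf)
    hence "exp (l * ((\<Sum>e\<in>S. c e) - p * (\<Sum>e\<in>U. c e))) = (\<Prod>e\<in>S. exp (l * c e * (1-p))) * (\<Prod>e\<in>U-S. exp (-(l * c e * p)))"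
      by (simp add: exp_add exp_sum fS U)
    moreover have "p ^ card S = (\<Prod>e\<in>S. p)" by simp
    moreover have "(1-p) ^ card (U-S) = (\<Prod>e\<in>U-S. (1-p))" by simp
    ultimately show ?thesis unfolding f1_def f2_def by (simp add: prod.distrib)
  qed
  have "(\<Sum>S\<in>Pow U. p ^ card S * (1-p) ^ card (U - S) *
            exp (l * ((\<Sum>e\<in>S. c e) - p * (\<Sum>e\<in>U. c e))))
       = (\<Sum>S\<in>Pow U. (\<Prod>e\<in>S. f1 e) * (\<Prod>e\<in>U-S. f2 e))"
    using eq by (rule sum.cong[OF refl])
  also have "\<dots> = (\<Prod>e\<in>U. f1 e + f2 e)" by (rule prod_add[OF U, symmetric])
  also have "\<dots> \<le> (\<Prod>e\<in>U. exp ((l * c e)\<^sup>2 * p))"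
  proof (rule prod_mono)
    fix e assume e: "e \<in> U"
    have "0 \<le> f1 e + f2 e" using p unfolding f1_def f2_def by simp
    moreover have "f1 e + f2 e \<le> exp ((l * c e)\<^sup>2 * p)"
      using mgf_factor[OF p, of "l * c e"] c e unfolding f1_def f2_def by (simp add: mult.assoc)
    ultimately show "0 \<le> f1 e + f2 e \<and> f1 e + f2 e \<le> exp ((l * c e)\<^sup>2 * p)" by simp
  qed
  also have "\<dots> = exp (\<Sum>e\<in>U. (l * c e)\<^sup>2 * p)" by (simp add: exp_sum U)
  also have "(\<Sum>e\<in>U. (l * c e)\<^sup>2 * p) = (l\<^sup>2 * p) * (\<Sum>e\<in>U. (c e)\<^sup>2)"
    by (simp add: sum_distrib_left power_mult_distrib algebra_simps)
  finally show ?thesis .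
qed

lemma tail_bound:
  fixes c :: "'a \<Rightarrow> real"
  assumes U: "finite U" and p: "0 \<le> p" "p \<le> 1" and l: "0 \<le> l" and c: "\<forall>e\<in>U. \<bar>l * c e\<bar> \<le> 1"
  shows "(\<Sum>S\<in>Pow U. if t < \<bar>(\<Sum>e\<in>S. c e) - p * (\<Sum>e\<in>U. c e)\<bar>
            then p ^ card S * (1-p) ^ card (U - S) else 0)
         \<le> 2 * exp (- (l * t) + (l\<^sup>2 * p) * (\<Sum>e\<in>U. (c e)\<^sup>2))"
proof -
  define w where "w S = p ^ card S * (1-p) ^ card (U - S)" for S
  define X where "X S = (\<Sum>e\<in>S. c e) - p * (\<Sum>e\<in>U. c e)" for S
  have w0: "0 \<le> w S" for S using p unfolding w_def by simp
  have pt: "(if t < \<bar>X S\<bar> then w S else 0) \<le> exp (-(l*t)) * (w S * exp (l * X S) + w S * exp ((-l) * X S))" for S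
  proof (cases "t < \<bar>X S\<bar>")
    case True
    have "1 \<le> exp (l * X S - l * t) + exp ((-l) * X S - l*t)"
    proof (cases "X S \<ge> 0")
      case True
      hence "l * X S - l * t \<ge> 0" using \<open>t < \<bar>X S\<bar>\<close> l by (simp add: right_diff_distrib[symmetric] mult_nonneg_nonneg)
      hence "1 \<le> exp (l * X S - l * t)" by simp
      thus ?thesis by (smt (verit) exp_gt_zero)
    next
      case False
      hence "(-l) * X S - l * t \<ge> 0" using \<open>t < \<bar>X S\<bar>\<close> l
        by (smt (verit, best) mult_minus_left mult_nonneg_nonneg right_diff_distrib)
      hence "1 \<le> exp ((-l) * X S - l * t)" by simp
      thus ?thesis by (smt (verit) exp_gt_zero)
    qed
    hence "w S \<le> w S * (exp (l * X S - l * t) + exp ((-l) * X S - l*t))"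
      using w0[of S] by (simp add: mult_le_cancel_left1)
    thus ?thesis using True by (simp add: exp_diff algebra_simps divide_inverse exp_minus)
  qed (simp add: w0 )
  have "(\<Sum>S\<in>Pow U. if t < \<bar>X S\<bar> then w S else 0)
      \<le> (\<Sum>S\<in>Pow U. exp (-(l*t)) * (w S * exp (l * X S) + w S * exp ((-l) * X S)))"
    by (rule sum_mono) (rule pt)
  also have "\<dots> = exp (-(l*t)) * ((\<Sum>S\<in>Pow U. w S * exp (l * X S)) + (\<Sum>S\<in>Pow U. w S * exp ((-l) * X S)))"
    by (simp add: sum_distrib_left sum.distrib distrib_left)
  also have "\<dots> \<le> exp (-(l*t)) * (exp ((l\<^sup>2 * p) * (\<Sum>e\<in>U. (c e)\<^sup>2)) + exp (((-l)\<^sup>2 * p) * (\<Sum>e\<in>U. (c e)\<^sup>2)))"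
    using mgf_bound[OF U p c] mgf_bound[OF U p, of "-l" c] c
    unfolding w_def X_def by (intro mult_left_mono add_mono) (auto simp: abs_mult)
  also have "\<dots> = 2 * exp (- (l * t) + (l\<^sup>2 * p) * (\<Sum>e\<in>U. (c e)\<^sup>2))"
    by (simp add: exp_add[symmetric])
  finally show ?thesis unfolding w_def X_def .
qed




lemma upairs_finite: "finite (upairs d)"
  by (rule finite_subset[of _ "{..<d} \<times> {..<d}"]) (auto simp: upairs_def)

lemma symcl_sub: "S \<subseteq> upairs d \<Longrightarrow> symcl S \<subseteq> {..<d} \<times> {..<d}"
  by (auto simp: symcl_def upairs_def)

lemma symcl_sum:
  fixes H :: "nat \<times> nat \<Rightarrow> real"
  assumes S: "S \<subseteq> upairs d"
  shows "sum H (symcl S \<inter> ({..<d} \<times> {..<d})) =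
         (\<Sum>e\<in>S. if fst e = snd e then H e else H e + H (snd e, fst e))"
proof -
  have fS: "finite S" using S upairs_finite finite_subset by blast
  define T where "T = {e\<in>S. fst e \<noteq> snd e}"
  define D where "D = {e\<in>S. fst e = snd e}"
  define sw where "sw = (\<lambda>(e::nat\<times>nat). (snd e, fst e))"
  have fT: "finite T" "finite D" using fS by (auto simp: T_def D_def)
  have eq: "symcl S \<inter> ({..<d} \<times> {..<d}) = S \<union> sw ` T"
    using symcl_sub[OF S] unfolding symcl_def T_def sw_def by (auto simp: image_iff) 
  have disj: "S \<inter> sw ` T = {}"
  proof (rule ccontr)
    assume "S \<inter> sw ` T \<noteq> {}"
    then obtain a b where ab: "(a,b) \<in> S" "(b,a) \<in> S" "a \<noteq> b" unfolding T_def sw_def by auto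
    from ab(1,2) S have "a \<le> b" "b \<le> a" unfolding upairs_def by auto
    with ab(3) show False by simp
  qed
  have inj: "inj_on sw T" unfolding sw_def by (auto simp: inj_on_def)
  have "sum H (symcl S \<inter> ({..<d} \<times> {..<d})) = sum H S + sum H (sw ` T)"
    unfolding eq by (rule sum.union_disjoint) (use fS fT disj in auto)
  also have "sum H (sw ` T) = sum (H \<circ> sw) T" by (rule sum.reindex[OF inj])
  also have "sum H S = sum H D + sum H T"
  proof -
    have "S = D \<union> T" "D \<inter> T = {}" unfolding D_def T_def by auto
    thus ?thesis using sum.union_disjoint[OF fT(2) fT(1), of H] by simp
  qed
  also have "(\<Sum>e\<in>S. if fst e = snd e then H e else H e + H (snd e, fst e))
      = sum H D + (\<Sum>e\<in>T. H e + H (snd e, fst e))"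
    unfolding D_def T_def
  proof -
    have a: "S \<inter> {e. fst e = snd e} = {e \<in> S. fst e = snd e}" by auto
    have b: "S \<inter> - {e. fst e = snd e} = {e \<in> S. fst e \<noteq> snd e}" by auto
    show "(\<Sum>e\<in>S. if fst e = snd e then H e else H e + H (snd e, fst e)) =
      sum H {e \<in> S. fst e = snd e} + (\<Sum>e\<in>{e \<in> S. fst e \<noteq> snd e}. H e + H (snd e, fst e))"
      by (simp add: sum.If_cases fS a b)
  qed
  ultimately show ?thesis by (simp add: sum.distrib sw_def comp_def)
qed




definition Om :: "nat \<Rightarrow> (nat \<times> nat) set \<Rightarrow> (nat \<times> nat) set" where
  "Om d \<Omega> = \<Omega> \<inter> ({..<d} \<times> {..<d})"

definition cf1 where "cf1 d \<Omega> z x v = (\<Sum>(i,j)\<in>Om d \<Omega>. -((z i*z j - x i*x j)*(x i*v j + v i*x j)))"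
definition cf2 where "cf2 d \<Omega> z x v = (\<Sum>(i,j)\<in>Om d \<Omega>. (x i*v j + v i*x j)^2/2 - (z i*z j - x i*x j)*(v i*v j))"
definition cf3 where "cf3 d \<Omega> (z::nat\<Rightarrow>real) x v = (\<Sum>(i,j)\<in>Om d \<Omega>. (x i*v j + v i*x j)*(v i*v j))"
definition cf4 where "cf4 d \<Omega> (z::nat\<Rightarrow>real) (x::nat\<Rightarrow>real) v = (\<Sum>(i,j)\<in>Om d \<Omega>. (v i*v j)^2/(2::real))"

lemma sum_poly: "(\<Sum>e\<in>A. f0 e + t*f1 e + t^2*f2 e + t^3*f3 e + t^4*f4 e) =
   sum f0 A + t*sum f1 A + t^2*sum f2 A + t^3 * sum f3 A + (t::real)^4 * sum f4 A"
  by (simp add: sum.distrib sum_distrib_left)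

lemma mc_expand:
  "mc_obj d \<Omega> z (\<lambda>i. x i + t * v i) = mc_obj d \<Omega> z x + t * cf1 d \<Omega> z x v + t^2 * cf2 d \<Omega> z x v
     + t^3 * cf3 d \<Omega> z x v + t^4 * cf4 d \<Omega> z x v"
proof -
  have pt: "(1/2) * (z i * z j - (x i + t * v i) * (x j + t * v j))\<^sup>2 =
     (1/2) * (z i * z j - x i * x j)\<^sup>2 + t * (-((z i*z j - x i*x j)*(x i*v j + v i*x j)))
     + t^2 * ((x i*v j + v i*x j)^2/2 - (z i*z j - x i*x j)*(v i*v j))
     + t^3 * ((x i*v j + v i*x j)*(v i*v j)) + t^4 * ((v i*v j)^2/2)" for i j
    by (simp add: power2_eq_square power3_eq_cube power4_eq_xxxx field_simps)
  have m: "mc_obj d \<Omega> z y = (\<Sum>(i,j)\<in>Om d \<Omega>. (1/2) * (z i * z j - y i * y j)\<^sup>2)" for y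
    unfolding mc_obj_def Om_def by (simp add: sum_distrib_left case_prod_unfold)
  have "mc_obj d \<Omega> z (\<lambda>i. x i + t * v i) = (\<Sum>(i,j)\<in>Om d \<Omega>. (1/2) * (z i * z j - x i * x j)\<^sup>2 + t * (-((z i*z j - x i*x j)*(x i*v j + v i*x j)))
     + t^2 * ((x i*v j + v i*x j)^2/2 - (z i*z j - x i*x j)*(v i*v j))
     + t^3 * ((x i*v j + v i*x j)*(v i*v j)) + t^4 * ((v i*v j)^2/2))"
    unfolding m by (subst pt) simp
  also have "\<dots> = mc_obj d \<Omega> z x + t * cf1 d \<Omega> z x v + t^2 * cf2 d \<Omega> z x v
     + t^3 * cf3 d \<Omega> z x v + t^4 * cf4 d \<Omega> z x v"
    unfolding m cf1_def cf2_def cf3_def cf4_def case_prod_unfold by (rule sum_poly)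
  finally show ?thesis .
qed

lemma poly_min:
  fixes a1 a2 a3 a4 r :: real
  assumes r: "r > 0" and h: "\<forall>t. \<bar>t\<bar> < r \<longrightarrow> 0 \<le> a1*t + a2*t^2 + a3*t^3 + a4*t^4"
  shows "a1 = 0 \<and> 0 \<le> a2"
proof -
  have bnd: "\<bar>a3*t^3 + a4*t^4\<bar> \<le> (\<bar>a3\<bar> + \<bar>a4\<bar>) * \<bar>t\<bar>^3" if "\<bar>t\<bar> \<le> 1" for t
  proof -
    have "\<bar>t\<bar>^4 \<le> \<bar>t\<bar>^3" using that by (intro power_decreasing) auto
    hence "\<bar>a4\<bar> * \<bar>t\<bar>^4 \<le> \<bar>a4\<bar> * \<bar>t\<bar>^3" by (simp add: mult_left_mono)
    have "\<bar>a3*t^3 + a4*t^4\<bar> \<le> \<bar>a3*t^3\<bar> + \<bar>a4*t^4\<bar>" by (rule abs_triangle_ineq)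
    also have "\<dots> = \<bar>a3\<bar>*\<bar>t\<bar>^3 + \<bar>a4\<bar>*\<bar>t\<bar>^4" by (simp add: abs_mult power_abs)
    also have "\<dots> \<le> \<bar>a3\<bar>*\<bar>t\<bar>^3 + \<bar>a4\<bar>*\<bar>t\<bar>^3" using \<open>\<bar>a4\<bar> * \<bar>t\<bar>^4 \<le> \<bar>a4\<bar> * \<bar>t\<bar>^3\<close> by simp
    finally show ?thesis by (simp add: distrib_right)
  qed
  have bnd2: "\<bar>a2*t^2 + a3*t^3 + a4*t^4\<bar> \<le> (\<bar>a2\<bar> + \<bar>a3\<bar> + \<bar>a4\<bar>) * t^2" if "\<bar>t\<bar> \<le> 1" for t
  proof -
    have "\<bar>t\<bar>^3 \<le> \<bar>t\<bar>^2" using that by (intro power_decreasing) auto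
    hence "(\<bar>a3\<bar> + \<bar>a4\<bar>) * \<bar>t\<bar>^3 \<le> (\<bar>a3\<bar> + \<bar>a4\<bar>) * \<bar>t\<bar>^2" by (simp add: mult_left_mono)
    moreover have "\<bar>a2*t^2\<bar> = \<bar>a2\<bar> * t^2" by (simp add: abs_mult)
    ultimately show ?thesis using bnd[OF that] by (simp add: power2_abs distrib_right) linarith
  qed
  define M where "M = \<bar>a2\<bar> + \<bar>a3\<bar> + \<bar>a4\<bar> + 1"
  have M: "M > 0" unfolding M_def by simp
  have a1: "a1 = 0"
  proof (rule ccontr)
    assume ne: "a1 \<noteq> 0"
    define \<tau> where "\<tau> = min (r/2) (min (1/2) (\<bar>a1\<bar> / (2*M)))"
    have tau: "\<tau> > 0" "\<tau> < r" "\<tau> \<le> 1" "\<tau> \<le> \<bar>a1\<bar> / (2*M)" using r ne M unfolding \<tau>_def by auto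
    define t where "t = - sgn a1 * \<tau>"
    have at: "\<bar>t\<bar> = \<tau>" using ne tau unfolding t_def by (simp add: abs_mult)
    have "\<bar>t\<bar> < r" using at tau by simp
    hence "0 \<le> a1*t + a2*t^2 + a3*t^3 + a4*t^4" using h by blast
    hence "0 \<le> a1*t + (a2*t^2 + a3*t^3 + a4*t^4)" by (simp add: add.assoc)
    moreover have "a1 * t = - \<bar>a1\<bar> * \<tau>" unfolding t_def by (simp add: abs_sgn algebra_simps sgn_mult_abs)
    moreover have "a2*t^2 + a3*t^3 + a4*t^4 \<le> M * \<tau>^2"
    proof -
      have "a2*t^2 + a3*t^3 + a4*t^4 \<le> (\<bar>a2\<bar> + \<bar>a3\<bar> + \<bar>a4\<bar>) * t^2" using bnd2[of t] at tau by linarith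
      also have "\<dots> = (\<bar>a2\<bar> + \<bar>a3\<bar> + \<bar>a4\<bar>) * \<tau>^2" using at by (metis power2_abs)
      also have "\<dots> \<le> M * \<tau>^2" unfolding M_def by (intro mult_right_mono) auto
      finally show ?thesis .
    qed
    moreover have "M * \<tau>^2 \<le> \<bar>a1\<bar> * \<tau> / 2"
    proof -
      have "M * \<tau> \<le> \<bar>a1\<bar>/2" using tau(4) M by (simp add: field_simps)
      hence "(M * \<tau>) * \<tau> \<le> (\<bar>a1\<bar>/2) * \<tau>" using tau by (intro mult_right_mono) auto
      thus ?thesis by (simp add: power2_eq_square mult.assoc)
    qed
    moreover have "\<bar>a1\<bar> * \<tau> > 0" using ne tau by simp
    ultimately show False by linarith
  qed
  have a2: "0 \<le> a2"
  proof (rule ccontr)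
    assume neg: "\<not> 0 \<le> a2"
    define N where "N = \<bar>a3\<bar> + \<bar>a4\<bar> + 1"
    have N: "N > 0" unfolding N_def by simp
    define \<tau> where "\<tau> = min (r/2) (min (1/2) (-a2 / (2*N)))"
    have tau: "\<tau> > 0" "\<tau> < r" "\<tau> \<le> 1" "\<tau> \<le> -a2 / (2*N)" using r neg N unfolding \<tau>_def by (auto simp: divide_neg_pos)
    have "\<bar>\<tau>\<bar> < r" using tau by simp
    hence "0 \<le> a1*\<tau> + a2*\<tau>^2 + a3*\<tau>^3 + a4*\<tau>^4" using h by blast
    hence "0 \<le> a1*\<tau> + a2*\<tau>^2 + (a3*\<tau>^3 + a4*\<tau>^4)" by (simp add: add.assoc)
    moreover have "a3*\<tau>^3 + a4*\<tau>^4 \<le> N * \<tau>^3"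
    proof -
      have at: "\<bar>\<tau>\<bar> = \<tau>" using tau by simp
      have "a3*\<tau>^3 + a4*\<tau>^4 \<le> (\<bar>a3\<bar> + \<bar>a4\<bar>) * \<bar>\<tau>\<bar>^3" using bnd[of \<tau>] tau by simp
      also have "\<dots> = (\<bar>a3\<bar> + \<bar>a4\<bar>) * \<tau>^3" unfolding at ..
      also have "\<dots> \<le> N * \<tau>^3" unfolding N_def using tau by (intro mult_right_mono) auto
      finally show ?thesis .
    qed
    moreover have "N * \<tau>^3 \<le> (-a2/2) * \<tau>^2"
    proof -
      have "N * \<tau> \<le> -a2/2" using tau(4) N by (simp add: field_simps)
      hence "(N * \<tau>) * \<tau>^2 \<le> (-a2/2) * \<tau>^2" by (intro mult_right_mono) auto
      thus ?thesis by (simp add: power2_eq_square power3_eq_cube mult.assoc)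
    qed
    moreover have "a2 * \<tau>^2 < 0" using neg tau by (simp add: mult_neg_pos)
    ultimately show False using a1 by simp
  qed
  from a1 a2 show ?thesis by simp
qed

lemma l2norm_scale: "l2norm d (\<lambda>i. x i - (x i + t * v i)) = \<bar>t\<bar> * l2norm d v"
proof -
  have "(\<Sum>i<d. (x i - (x i + t * v i))\<^sup>2) = t\<^sup>2 * (\<Sum>i<d. (v i)\<^sup>2)"
    by (simp add: sum_distrib_left power_mult_distrib)
  thus ?thesis unfolding l2norm_def by (simp add: real_sqrt_mult)
qed

lemma locmin_conds:
  assumes "local_min_d d (mc_obj d \<Omega> z) x"
  shows "cf1 d \<Omega> z x v = 0 \<and> 0 \<le> cf2 d \<Omega> z x v"
proof -
  obtain r where r: "r > 0" and h: "\<And>y. l2norm d (\<lambda>i. x i - y i) < r \<Longrightarrow> mc_obj d \<Omega> z x \<le> mc_obj d \<Omega> z y"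
    using assms unfolding local_min_d_def by blast
  define L where "L = l2norm d v"
  have L: "L \<ge> 0" unfolding L_def l2norm_def by (simp add: sum_nonneg)
  define r' where "r' = r / (L + 1)"
  have r': "r' > 0" using r L unfolding r'_def by simp
  show ?thesis
  proof (rule poly_min[OF r'], intro allI impI)
    fix t :: real assume t: "\<bar>t\<bar> < r'"
    have "\<bar>t\<bar> * L \<le> \<bar>t\<bar> * (L+1)" by (simp add: mult_left_mono)
    also have "\<dots> < r' * (L + 1)" using t L by (intro mult_strict_right_mono) auto
    also have "\<dots> = r" unfolding r'_def using L by simp
    finally have "l2norm d (\<lambda>i. x i - (x i + t * v i)) < r" unfolding l2norm_scale L_def .
    from h[OF this] show "0 \<le> cf1 d \<Omega> z x v * t + cf2 d \<Omega> z x v * t^2 + cf3 d \<Omega> z x v * t^3 + cf4 d \<Omega> z x v * t^4"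
      unfolding mc_expand by (simp add: algebra_simps)
  qed
qed




lemma final_alg:
  fixes \<eta> s \<alpha> :: real
  assumes e0: "0 \<le> \<eta>" and e1: "\<eta> \<le> 1/100" and s0: "0 \<le> s"
    and h1: "\<bar>\<alpha>\<^sup>2 - s\<^sup>2\<bar> \<le> 2*\<eta>" and h2: "\<bar>\<alpha> * (1 - s)\<bar> \<le> \<eta>"
    and h3: "s + 2*\<alpha>\<^sup>2 \<ge> 1 - 4*\<eta>"
  shows "s + 1 - 2*\<bar>\<alpha>\<bar> \<le> 20*\<eta>"
proof -
  define a where "a = \<bar>\<alpha>\<bar>"
  have a0: "0 \<le> a" unfolding a_def by simp
  have aa: "a\<^sup>2 = \<alpha>\<^sup>2" unfolding a_def by simp
  have s4: "s > 1/4"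
  proof (rule ccontr)
    assume "\<not> s > 1/4"
    hence "s \<le> 1/4" by simp
    hence "s * s \<le> 1/4 * (1/4)" using s0 by (intro mult_mono) auto
    hence "\<alpha>\<^sup>2 \<le> 1/16 + 2*\<eta>" using h1 by (simp add: power2_eq_square abs_le_iff)
    thus False using h3 e1 \<open>s \<le> 1/4\<close> by linarith
  qed
  have "s * s > 1/4 * (1/4)" using s4 by (intro mult_strict_mono) auto
  hence a2: "a\<^sup>2 > 1/25" using h1 e1 aa by (simp add: power2_eq_square abs_le_iff)
  have a5: "a > 1/5"
  proof (rule ccontr)
    assume "\<not> a > 1/5"
    hence "a * a \<le> 1/5 * (1/5)" using a0 by (intro mult_mono) auto
    thus False using a2 by (simp add: power2_eq_square)
  qed
  have h2': "a * \<bar>1 - s\<bar> \<le> \<eta>" using h2 unfolding a_def by (simp add: abs_mult)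
  have "(1/5) * \<bar>1 - s\<bar> \<le> a * \<bar>1 - s\<bar>" using a5 by (intro mult_right_mono) auto
  hence d1: "\<bar>1 - s\<bar> \<le> 5*\<eta>" using h2' by simp
  have "\<bar>s - a\<bar> * (s + a) = \<bar>(s - a) * (s + a)\<bar>" using s0 a0 by (simp add: abs_mult)
  also have "(s - a) * (s + a) = s\<^sup>2 - a\<^sup>2" by (simp add: power2_eq_square algebra_simps)
  finally have "\<bar>s - a\<bar> * (s + a) = \<bar>s\<^sup>2 - a\<^sup>2\<bar>" .
  hence "\<bar>s - a\<bar> * (s + a) \<le> 2*\<eta>" using h1 aa by (simp add: abs_minus_commute)
  moreover have "\<bar>s - a\<bar> * (2/5) \<le> \<bar>s - a\<bar> * (s + a)" using s4 a5 by (intro mult_left_mono) auto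
  ultimately have d2: "\<bar>s - a\<bar> \<le> 5*\<eta>" by simp
  have "s - a \<le> \<bar>s - a\<bar>" "1 - s \<le> \<bar>1 - s\<bar>" by auto
  hence "s + 1 - 2*a \<le> 20*\<eta>" using d1 d2 by linarith
  thus ?thesis unfolding a_def .
qed




definition Qf :: "nat \<Rightarrow> (nat \<times> nat) set \<Rightarrow> (nat \<Rightarrow> real) \<Rightarrow> real" where
  "Qf d \<Omega> w = (\<Sum>(i,j)\<in>Om d \<Omega>. w i * w j)"

lemma Qf_lin: "c1*Qf d \<Omega> a + c2*Qf d \<Omega> b + c3*Qf d \<Omega> e + c4 * Qf d \<Omega> f =
  (\<Sum>(i,j)\<in>Om d \<Omega>. c1*(a i*a j) + c2*(b i*b j) + c3*(e i*e j) + c4*(f i * f j))"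
  by (simp add: Qf_def sum.distrib sum_distrib_left case_prod_unfold)

lemma I1: "cf1 d \<Omega> z x x = (-2)*Qf d \<Omega> (\<lambda>i. z i * x i) + 2*Qf d \<Omega> (\<lambda>i. x i * x i)
   + 0*Qf d \<Omega> z + 0*Qf d \<Omega> z"
  unfolding cf1_def Qf_lin by (rule sum.cong[OF refl]) (auto simp: algebra_simps)

lemma I2: "cf1 d \<Omega> z x z = (-1/2)*Qf d \<Omega> (\<lambda>i. z i * x i + z i * z i) + (1/2)*Qf d \<Omega> (\<lambda>i. z i * x i - z i * z i)
   + (1/2)*Qf d \<Omega> (\<lambda>i. x i * x i + z i * x i) + (-1/2) * Qf d \<Omega> (\<lambda>i. x i * x i - z i * x i)"
  unfolding cf1_def Qf_lin by (rule sum.cong[OF refl]) (auto simp: algebra_simps)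

lemma I3: "cf2 d \<Omega> z x z = (1/4)*Qf d \<Omega> (\<lambda>i. x i * x i + z i * z i) + (-1/4)*Qf d \<Omega> (\<lambda>i. x i * x i - z i * z i)
   + 2*Qf d \<Omega> (\<lambda>i. z i * x i) + (-1) * Qf d \<Omega> (\<lambda>i. z i * z i)"
  unfolding cf2_def Qf_lin by (rule sum.cong[OF refl]) (auto simp: algebra_simps power2_eq_square)

lemma abs_p: fixes p a c :: real assumes "0 < p" "\<bar>p*a\<bar> \<le> c*p" shows "\<bar>a\<bar> \<le> c"
proof -
  have "p * \<bar>a\<bar> \<le> p * c" using assms by (simp add: abs_mult mult.commute)
  thus ?thesis using assms(1) by simp
qed

lemma low_p: fixes p a c :: real assumes "0 < p" "-(c*p) \<le> p*a" shows "-c \<le> a"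
proof -
  have "p * (-c) \<le> p * a" using assms(2) by (simp add: algebra_simps)
  thus ?thesis using assms(1) mult_le_cancel_left_pos by blast
qed

lemma det_main:
  fixes \<mu> \<eta> p :: real and d :: nat
  assumes d: "0 < d" and p: "0 < p" and e0: "0 \<le> \<eta>" and e1: "\<eta> \<le> 1/100"
    and good: "\<forall>w. (\<forall>i<d. \<bar>w i\<bar> \<le> 8*\<mu>\<^sup>2/real d) \<longrightarrow> \<bar>Qf d \<Omega> w - p*(\<Sum>i<d. w i)\<^sup>2\<bar> \<le> \<eta>*p"
    and z1: "(\<Sum>i<d. (z i)\<^sup>2) = 1" and zb: "\<forall>i<d. \<bar>z i\<bar> \<le> \<mu>/sqrt (real d)"
    and lm: "local_min_d d (mc_obj d \<Omega> z) x" and xb: "\<forall>i<d. \<bar>x i\<bar> < 2*\<mu>/sqrt (real d)"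
  shows "min (l2norm d (\<lambda>i. x i - z i)) (l2norm d (\<lambda>i. x i + z i)) \<le> sqrt (20*\<eta>)"
proof -
  define r where "r = \<mu>/sqrt (real d)"
  have r0: "0 \<le> r" using zb d unfolding r_def by (meson abs_ge_zero order_trans)
  have r2: "8*\<mu>\<^sup>2/real d = 8 * r^2" unfolding r_def using d by (simp add: power_divide)
  have zr: "\<bar>z i\<bar> \<le> r" if "i<d" for i using zb that unfolding r_def by simp
  have xr: "\<bar>x i\<bar> \<le> 2*r" if "i<d" for i using xb that unfolding r_def by (simp add: less_imp_le)
  have bd: "\<bar>a * b\<bar> \<le> ca * cb" if "\<bar>a\<bar> \<le> ca" "\<bar>b\<bar> \<le> cb" for a b ca cb :: real
    unfolding abs_mult using that by (intro mult_mono) auto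
  have bzx: "\<bar>z i * x i\<bar> \<le> 2*r^2" if "i<d" for i using bd[OF zr[OF that] xr[OF that]] by (simp add: power2_eq_square)
  have bxx: "\<bar>x i * x i\<bar> \<le> 4*r^2" if "i<d" for i using bd[OF xr[OF that] xr[OF that]] by (simp add: power2_eq_square)
  have bzz: "\<bar>z i * z i\<bar> \<le> r^2" if "i<d" for i using bd[OF zr[OF that] zr[OF that]] by (simp add: power2_eq_square)
  have G: "\<bar>Qf d \<Omega> w - p*(\<Sum>i<d. w i)\<^sup>2\<bar> \<le> \<eta>*p" if "\<forall>i<d. \<bar>w i\<bar> \<le> 8 * r^2" for w
    using good that unfolding r2 by blast
  have r2nn: "0 \<le> r^2" by simp
  define \<alpha> where "\<alpha> = (\<Sum>i<d. z i * x i)"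
  define s where "s = (\<Sum>i<d. x i * x i)"
  have zz1: "(\<Sum>i<d. z i * z i) = 1" using z1 by (simp add: power2_eq_square)
  have s0: "0 \<le> s" unfolding s_def by (simp add: sum_nonneg)
  have G1: "\<bar>Qf d \<Omega> (\<lambda>i. z i * x i) - p*\<alpha>\<^sup>2\<bar> \<le> \<eta>*p"
    unfolding \<alpha>_def using bzx by (intro G) (smt (verit) r2nn)
  have G2: "\<bar>Qf d \<Omega> (\<lambda>i. x i * x i) - p*s\<^sup>2\<bar> \<le> \<eta>*p"
    unfolding s_def using bxx by (intro G) (smt (verit) r2nn)
  have G3: "\<bar>Qf d \<Omega> (\<lambda>i. z i * z i) - p*1\<^sup>2\<bar> \<le> \<eta>*p"
    unfolding zz1[symmetric] using bzz by (intro G) (smt (verit) r2nn)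
  have G4: "\<bar>Qf d \<Omega> (\<lambda>i. z i * x i + z i * z i) - p*(\<alpha>+1)\<^sup>2\<bar> \<le> \<eta>*p"
  proof -
    have "(\<Sum>i<d. z i * x i + z i * z i) = \<alpha> + 1" unfolding \<alpha>_def zz1[symmetric] by (simp add: sum.distrib)
    moreover have b: "\<forall>i<d. \<bar>z i * x i + z i * z i\<bar> \<le> 8 * r^2" using bzx bzz by (smt (verit) r2nn)
    ultimately show ?thesis using G[OF b] by simp
  qed
  have G5: "\<bar>Qf d \<Omega> (\<lambda>i. z i * x i - z i * z i) - p*(\<alpha>-1)\<^sup>2\<bar> \<le> \<eta>*p"
  proof -
    have "(\<Sum>i<d. z i * x i - z i * z i) = \<alpha> - 1" unfolding \<alpha>_def zz1[symmetric] by (simp add: sum_subtractf)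
    moreover have b: "\<forall>i<d. \<bar>z i * x i - z i * z i\<bar> \<le> 8 * r^2" using bzx bzz by (smt (verit) r2nn)
    ultimately show ?thesis using G[OF b] by simp
  qed
  have G6: "\<bar>Qf d \<Omega> (\<lambda>i. x i * x i + z i * x i) - p*(s+\<alpha>)\<^sup>2\<bar> \<le> \<eta>*p"
  proof -
    have "(\<Sum>i<d. x i * x i + z i * x i) = s + \<alpha>" unfolding \<alpha>_def s_def by (simp add: sum.distrib)
    moreover have b: "\<forall>i<d. \<bar>x i * x i + z i * x i\<bar> \<le> 8 * r^2" using bzx bxx by (smt (verit) r2nn)
    ultimately show ?thesis using G[OF b] by simp
  qed
  have G7: "\<bar>Qf d \<Omega> (\<lambda>i. x i * x i - z i * x i) - p*(s-\<alpha>)\<^sup>2\<bar> \<le> \<eta>*p"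
  proof -
    have "(\<Sum>i<d. x i * x i - z i * x i) = s - \<alpha>" unfolding \<alpha>_def s_def by (simp add: sum_subtractf)
    moreover have b: "\<forall>i<d. \<bar>x i * x i - z i * x i\<bar> \<le> 8 * r^2" using bzx bxx by (smt (verit) r2nn)
    ultimately show ?thesis using G[OF b] by simp
  qed
  have G8: "\<bar>Qf d \<Omega> (\<lambda>i. x i * x i + z i * z i) - p*(s+1)\<^sup>2\<bar> \<le> \<eta>*p"
  proof -
    have "(\<Sum>i<d. x i * x i + z i * z i) = s + 1" unfolding zz1[symmetric] s_def by (simp add: sum.distrib)
    moreover have b: "\<forall>i<d. \<bar>x i * x i + z i * z i\<bar> \<le> 8 * r^2" using bzz bxx by (smt (verit) r2nn)
    ultimately show ?thesis using G[OF b] by simp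
  qed
  have G9: "\<bar>Qf d \<Omega> (\<lambda>i. x i * x i - z i * z i) - p*(s-1)\<^sup>2\<bar> \<le> \<eta>*p"
  proof -
    have "(\<Sum>i<d. x i * x i - z i * z i) = s - 1" unfolding zz1[symmetric] s_def by (simp add: sum_subtractf)
    moreover have b: "\<forall>i<d. \<bar>x i * x i - z i * z i\<bar> \<le> 8 * r^2" using bzz bxx by (smt (verit) r2nn)
    ultimately show ?thesis using G[OF b] by simp
  qed
  have c1x: "cf1 d \<Omega> z x x = 0" and c1z: "cf1 d \<Omega> z x z = 0" and c2z: "0 \<le> cf2 d \<Omega> z x z"
    using locmin_conds[OF lm] by auto
  have "p * (\<alpha>\<^sup>2 - s\<^sup>2) \<le> 2*\<eta>*p" "-(2*\<eta>*p) \<le> p * (\<alpha>\<^sup>2 - s\<^sup>2)"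
    using c1x G1 G2 unfolding I1 by (auto simp: abs_le_iff algebra_simps)
  hence "\<bar>p * (\<alpha>\<^sup>2 - s\<^sup>2)\<bar> \<le> (2*\<eta>)*p" by (simp add: abs_le_iff algebra_simps)
  hence h1: "\<bar>\<alpha>\<^sup>2 - s\<^sup>2\<bar> \<le> 2*\<eta>" by (rule abs_p[OF p])
  have e2: "(-1/2)*(p*(\<alpha>+1)\<^sup>2) + (1/2)*(p*(\<alpha>-1)\<^sup>2) + (1/2)*(p*(s+\<alpha>)\<^sup>2) + (-1/2)*(p*(s-\<alpha>)\<^sup>2)
     = p * (2 * (\<alpha> * (s - 1)))" by (simp add: power2_eq_square algebra_simps)
  have "p * (2 * (\<alpha> * (s - 1))) \<le> 2*\<eta>*p" "-(2*\<eta>*p) \<le> p * (2 * (\<alpha> * (s - 1)))"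
    using c1z[unfolded I2] G4 G5 G6 G7 e2 by (simp only: abs_le_iff, linarith)+
  hence "\<bar>p * (2 * (\<alpha> * (s - 1)))\<bar> \<le> (2*\<eta>)*p" by (simp add: abs_le_iff algebra_simps)
  hence "\<bar>2 * (\<alpha> * (s - 1))\<bar> \<le> 2*\<eta>" by (rule abs_p[OF p])
  hence h2: "\<bar>\<alpha> * (1 - s)\<bar> \<le> \<eta>" by (simp add: abs_le_iff algebra_simps)
  have e3: "(1/4)*(p*(s+1)\<^sup>2) + (-1/4)*(p*(s-1)\<^sup>2) + 2*(p*\<alpha>\<^sup>2) + (-1)*(p*1\<^sup>2) = p * (s + 2*\<alpha>\<^sup>2 - 1)"
    by (simp add: power2_eq_square algebra_simps)
  have "-(4*\<eta>*p) \<le> p * (s + 2*\<alpha>\<^sup>2 - 1)"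
    using c2z[unfolded I3] G8 G9 G1 G3 e3 by (simp only: abs_le_iff, linarith)
  hence "-(4*\<eta>) \<le> s + 2*\<alpha>\<^sup>2 - 1" by (rule low_p[OF p])
  hence h3: "s + 2*\<alpha>\<^sup>2 \<ge> 1 - 4*\<eta>" by simp
  have fin: "s + 1 - 2*\<bar>\<alpha>\<bar> \<le> 20*\<eta>" by (rule final_alg[OF e0 e1 s0 h1 h2 h3])
  have n1: "l2norm d (\<lambda>i. x i - z i) = sqrt (s + 1 - 2*\<alpha>)"
  proof -
    have "(\<Sum>i<d. (x i - z i)\<^sup>2) = (\<Sum>i<d. x i * x i + z i * z i - 2 * (z i * x i))"
      by (rule sum.cong) (auto simp: power2_eq_square algebra_simps)
    also have "\<dots> = s + 1 - 2*\<alpha>" unfolding s_def \<alpha>_def zz1[symmetric]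
      by (simp add: sum.distrib sum_subtractf sum_distrib_left)
    finally show ?thesis unfolding l2norm_def by simp
  qed
  have n2: "l2norm d (\<lambda>i. x i + z i) = sqrt (s + 1 + 2*\<alpha>)"
  proof -
    have "(\<Sum>i<d. (x i + z i)\<^sup>2) = (\<Sum>i<d. x i * x i + z i * z i + 2 * (z i * x i))"
      by (rule sum.cong) (auto simp: power2_eq_square algebra_simps)
    also have "\<dots> = s + 1 + 2*\<alpha>" unfolding s_def \<alpha>_def zz1[symmetric]
      by (simp add: sum.distrib sum_distrib_left)
    finally show ?thesis unfolding l2norm_def by simp
  qed
  show ?thesis
  proof (cases "\<alpha> \<ge> 0")
    case True
    hence "l2norm d (\<lambda>i. x i - z i) \<le> sqrt (20*\<eta>)" unfolding n1 using fin by simp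
    thus ?thesis by simp
  next
    case False
    hence "l2norm d (\<lambda>i. x i + z i) \<le> sqrt (20*\<eta>)" unfolding n2 using fin by simp
    thus ?thesis by simp
  qed
qed




abbreviation wt where "wt d p S \<equiv> p ^ card S * (1-p) ^ card (upairs d - S)"

lemma wt_sum: "(\<Sum>S\<in>Pow (upairs d). wt d p S) = (1::real)"
proof -
  have "(\<Prod>e\<in>upairs d. p + (1-p)) = (\<Sum>S\<in>Pow (upairs d). (\<Prod>e\<in>S. p) * (\<Prod>e\<in>upairs d - S. 1-p))"
    by (rule prod_add[OF upairs_finite])
  thus ?thesis by simp
qed

lemma omega_nonneg: "0 \<le> p \<Longrightarrow> p \<le> 1 \<Longrightarrow> 0 \<le> omega_prob d p E"
  unfolding omega_prob_def by (intro sum_nonneg) auto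

lemma union_bound:
  fixes p :: real
  assumes I: "finite I" and p: "0 \<le> p" "p \<le> 1"
    and imp: "\<And>\<Omega>. (\<forall>k\<in>I. \<not> B k \<Omega>) \<Longrightarrow> E \<Omega>"
  shows "omega_prob d p E \<ge> 1 - (\<Sum>k\<in>I. omega_prob d p (B k))"
proof -
  have pt: "(if E (symcl S) then wt d p S else 0) \<ge> wt d p S - (\<Sum>k\<in>I. if B k (symcl S) then wt d p S else 0)" for S
  proof (cases "\<exists>k\<in>I. B k (symcl S)")
    case True
    then obtain k where k: "k \<in> I" "B k (symcl S)" by blast
    have "wt d p S = (if B k (symcl S) then wt d p S else 0)" using k by simp
    also have "\<dots> \<le> (\<Sum>k\<in>I. if B k (symcl S) then wt d p S else 0)"
      by (rule member_le_sum[OF k(1)]) (use p I in auto)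
    finally have "wt d p S \<le> (\<Sum>k\<in>I. if B k (symcl S) then wt d p S else 0)" .
    moreover have "0 \<le> wt d p S" using p by simp
    ultimately show ?thesis by (cases "E (symcl S)") auto
  next
    case False
    thus ?thesis using imp by auto
  qed
  have "1 - (\<Sum>k\<in>I. omega_prob d p (B k)) = (\<Sum>S\<in>Pow (upairs d). wt d p S - (\<Sum>k\<in>I. if B k (symcl S) then wt d p S else 0))"
  proof -
    have "(\<Sum>S\<in>Pow (upairs d). wt d p S - (\<Sum>k\<in>I. if B k (symcl S) then wt d p S else 0))
      = (\<Sum>S\<in>Pow (upairs d). wt d p S) - (\<Sum>S\<in>Pow (upairs d). \<Sum>k\<in>I. if B k (symcl S) then wt d p S else 0)"
      by (rule sum_subtractf)
    also have "(\<Sum>S\<in>Pow (upairs d). \<Sum>k\<in>I. if B k (symcl S) then wt d p S else 0)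
       = (\<Sum>k\<in>I. \<Sum>S\<in>Pow (upairs d). if B k (symcl S) then wt d p S else 0)"
      by (rule sum.swap)
    finally show ?thesis unfolding omega_prob_def wt_sum by simp
  qed
  also have "\<dots> \<le> omega_prob d p E" unfolding omega_prob_def by (rule sum_mono) (rule pt)
  finally show ?thesis .
qed




lemma Qf_symcl:
  assumes "S \<subseteq> upairs d"
  shows "Qf d (symcl S) g = (\<Sum>e\<in>S. if fst e = snd e then g (fst e) * g (snd e)
            else g (fst e) * g (snd e) + g (snd e) * g (fst e))"
proof -
  have H: "sum (\<lambda>e. g (fst e) * g (snd e)) (symcl S \<inter> ({..<d} \<times> {..<d})) =
         (\<Sum>e\<in>S. if fst e = snd e then g (fst e) * g (snd e) else g (fst e) * g (snd e) + g (snd e) * g (fst e))"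
    using symcl_sum[OF assms, of "\<lambda>e. g (fst e) * g (snd e)"] by (simp cong: if_cong)
  show ?thesis unfolding Qf_def Om_def case_prod_unfold H ..
qed

lemma symcl_full: "symcl (upairs d) \<inter> ({..<d} \<times> {..<d}) = {..<d} \<times> {..<d}"
  unfolding symcl_def upairs_def by auto

lemma sq_sum: "(\<Sum>i<d. g i)\<^sup>2 = (\<Sum>e\<in>upairs d. if fst e = snd e then g (fst e) * g (snd e)
            else g (fst e) * g (snd e) + g (snd e) * (g (fst e)::real))"
proof -
  have "(\<Sum>i<d. g i)\<^sup>2 = (\<Sum>i<d. \<Sum>j<d. g i * g j)" by (simp add: power2_eq_square sum_product)
  also have "\<dots> = (\<Sum>e\<in>{..<d} \<times> {..<d}. g (fst e) * g (snd e))" by (simp add: sum.cartesian_product case_prod_unfold)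
  also have "\<dots> = sum (\<lambda>e. g (fst e) * g (snd e)) (symcl (upairs d) \<inter> ({..<d} \<times> {..<d}))" unfolding symcl_full ..
  also have "\<dots> = (\<Sum>e\<in>upairs d. if fst e = snd e then g (fst e) * g (snd e)
            else g (fst e) * g (snd e) + g (snd e) * (g (fst e)::real))"
    using symcl_sum[of "upairs d" d "\<lambda>e. g (fst e) * g (snd e)"] by (simp cong: if_cong)
  finally show ?thesis .
qed

lemma card_upairs: "card (upairs d) \<le> d * d"
proof -
  have "card (upairs d) \<le> card ({..<d} \<times> {..<d})" by (rule card_mono) (auto simp: upairs_def)
  thus ?thesis by (simp add: card_cartesian_product)
qed

lemma bad_bound:
  fixes g :: "nat \<Rightarrow> real" and K \<eta> p :: real
  assumes d: "0 < d" and p: "0 < p" "p \<le> 1" and K: "1 \<le> K" and e: "0 < \<eta>" "\<eta> \<le> 1"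
    and gb: "\<forall>i<d. \<bar>g i\<bar> \<le> K / real d"
  shows "omega_prob d p (\<lambda>\<Omega>. \<eta>*p/2 < \<bar>Qf d \<Omega> g - p*(\<Sum>i<d. g i)\<^sup>2\<bar>)
     \<le> 2 * exp (- (\<eta>^2 * p * (real d)^2 / (64 * K^4)))"
proof -
  define U where "U = upairs d"
  define c where "c e = (if fst e = snd e then g (fst e) * g (snd e)
            else g (fst e) * g (snd e) + g (snd e) * g (fst e))" for e
  define t where "t = \<eta>*p/2"
  define b where "b = 2 * (K / real d)^2"
  define l where "l = \<eta> * (real d)^2 / (16 * K^4)"
  have dpos: "real d > 0" using d by simp
  have Kpos: "K > 0" using K by simp
  have cb: "\<bar>c e\<bar> \<le> b" if "e \<in> U" for e
  proof -
    have i: "fst e < d" "snd e < d" using that unfolding U_def upairs_def by auto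
    have gg: "\<bar>g a * g a'\<bar> \<le> (K / real d)^2" if "a < d" "a' < d" for a a'
      using gb that unfolding abs_mult power2_eq_square by (intro mult_mono) auto
    have X: "(K / real d)^2 \<ge> 0" by simp
    show ?thesis
    proof (cases "fst e = snd e")
      case True
      hence "\<bar>c e\<bar> = \<bar>g (fst e) * g (snd e)\<bar>" unfolding c_def by simp
      also have "\<dots> \<le> (K / real d)^2" by (rule gg[OF i])
      also have "\<dots> \<le> b" unfolding b_def using X by linarith
      finally show ?thesis .
    next
      case False
      have "\<bar>g (fst e) * g (snd e) + g (snd e) * g (fst e)\<bar> \<le> \<bar>g (fst e) * g (snd e)\<bar> + \<bar>g (snd e) * g (fst e)\<bar>"
        by (rule abs_triangle_ineq)
      thus ?thesis unfolding c_def b_def using False gg[OF i] gg[OF i(2,1)] by simp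
    qed
  qed
  have l0: "0 \<le> l" unfolding l_def using e Kpos by simp
  have lb: "l * b = \<eta> / (8 * K^2)" unfolding l_def b_def using dpos Kpos
    by (simp add: power2_eq_square power4_eq_xxxx field_simps)
  have lb1: "l * b \<le> 1"
  proof -
    have "1 \<le> K^2" using K by (simp add: one_le_power)
    hence "8 * K^2 \<ge> 1" by linarith
    hence "\<eta> / (8 * K^2) \<le> 1" using e by (simp add: divide_le_eq)
    thus ?thesis using lb by simp
  qed
  have lc: "\<forall>e\<in>U. \<bar>l * c e\<bar> \<le> 1"
  proof
    fix e assume "e \<in> U"
    hence "\<bar>l * c e\<bar> \<le> l * b" using l0 cb by (simp add: abs_mult mult_left_mono)
    thus "\<bar>l * c e\<bar> \<le> 1" using lb1 by simp
  qed
  have fU: "finite U" unfolding U_def by (rule upairs_finite)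
  have sc: "(\<Sum>e\<in>U. (c e)\<^sup>2) \<le> real (d * d) * b^2"
  proof -
    have "(\<Sum>e\<in>U. (c e)\<^sup>2) \<le> (\<Sum>e\<in>U. b^2)"
    proof (rule sum_mono)
      fix e assume "e \<in> U"
      hence "\<bar>c e\<bar> \<le> b" by (rule cb)
      thus "(c e)\<^sup>2 \<le> b^2" by (metis abs_ge_zero order_trans power2_abs power_mono)
    qed
    also have "\<dots> = real (card U) * b^2" by simp
    also have "\<dots> \<le> real (d * d) * b^2" using card_upairs[of d] unfolding U_def
      by (intro mult_right_mono) (simp only: of_nat_le_iff, simp)
    finally show ?thesis .
  qed
  have eqv: "omega_prob d p (\<lambda>\<Omega>. \<eta>*p/2 < \<bar>Qf d \<Omega> g - p*(\<Sum>i<d. g i)\<^sup>2\<bar>) =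
     (\<Sum>S\<in>Pow U. if t < \<bar>(\<Sum>e\<in>S. c e) - p * (\<Sum>e\<in>U. c e)\<bar> then p ^ card S * (1-p) ^ card (U - S) else 0)"
    unfolding omega_prob_def U_def
  proof (rule sum.cong[OF refl])
    fix S assume "S \<in> Pow (upairs d)"
    hence "Qf d (symcl S) g = (\<Sum>e\<in>S. c e)" unfolding c_def by (intro Qf_symcl) auto
    moreover have "(\<Sum>i<d. g i)\<^sup>2 = (\<Sum>e\<in>upairs d. c e)" unfolding c_def by (rule sq_sum)
    ultimately show "(if \<eta>*p/2 < \<bar>Qf d (symcl S) g - p*(\<Sum>i<d. g i)\<^sup>2\<bar> then p ^ card S * (1 - p) ^ card (upairs d - S) else 0) =
       (if t < \<bar>(\<Sum>e\<in>S. c e) - p * (\<Sum>e\<in>upairs d. c e)\<bar> then p ^ card S * (1-p) ^ card (upairs d - S) else 0)"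
      unfolding t_def by simp
  qed
  have "omega_prob d p (\<lambda>\<Omega>. \<eta>*p/2 < \<bar>Qf d \<Omega> g - p*(\<Sum>i<d. g i)\<^sup>2\<bar>)
      \<le> 2 * exp (- (l * t) + (l\<^sup>2 * p) * (\<Sum>e\<in>U. (c e)\<^sup>2))"
    unfolding eqv using p by (intro tail_bound[OF fU _ _ l0 lc]) auto
  also have "\<dots> \<le> 2 * exp (- (l * t) + (l\<^sup>2 * p) * (real (d * d) * b^2))"
    using sc p by (simp add: mult_left_mono)
  also have "- (l * t) + (l\<^sup>2 * p) * (real (d * d) * b^2) = - (\<eta>^2 * p * (real d)^2 / (64 * K^4))"
    unfolding l_def t_def b_def using dpos Kpos
    by (simp add: power2_eq_square power4_eq_xxxx field_simps)
  finally show ?thesis .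
qed




definition Ks :: "nat \<Rightarrow> nat \<Rightarrow> int list set" where
  "Ks d N = {ks. set ks \<subseteq> {- int N..int N} \<and> length ks = d}"

definition gv :: "nat \<Rightarrow> real \<Rightarrow> nat \<Rightarrow> int list \<Rightarrow> nat \<Rightarrow> real" where
  "gv d K N ks = (\<lambda>i. K * real_of_int (ks ! i) / (real d * real N))"

lemma Ks_fin: "finite (Ks d N)" unfolding Ks_def by (rule finite_lists_length_eq) simp
lemma Ks_card: "card (Ks d N) = (2*N+1)^d"
proof -
  have "card {- int N..int N} = nat (2*int N + 1)" by simp
  also have "\<dots> = 2*N+1" by arith
  finally have c: "card {- int N..int N} = 2*N+1" .
  show ?thesis unfolding Ks_def by (simp only: card_lists_length_eq[OF finite_atLeastAtMost_int] c)
qed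

lemma absD: "\<bar>t\<bar> \<le> n \<Longrightarrow> -n \<le> t \<and> t \<le> (n::real)" unfolding abs_le_iff by linarith

lemma Om_fin: "finite (Om d \<Omega>)" unfolding Om_def by (rule finite_subset[of _ "{..<d}\<times>{..<d}"]) auto

lemma good_from_grid:
  fixes K \<eta> p :: real
  assumes d: "0 < d" and p: "0 < p" and K: "1 \<le> K" and e: "0 < \<eta>" "\<eta> \<le> 1" and N: "0 < N" "12 * K^2 / \<eta> \<le> real N"
    and nb: "\<forall>ks\<in>Ks d N. \<not> (\<eta>*p/2 < \<bar>Qf d \<Omega> (gv d K N ks) - p*(\<Sum>i<d. gv d K N ks i)\<^sup>2\<bar>)"
  shows "\<forall>w. (\<forall>i<d. \<bar>w i\<bar> \<le> K / real d) \<longrightarrow> \<bar>Qf d \<Omega> w - p*(\<Sum>i<d. w i)\<^sup>2\<bar> \<le> \<eta>*p"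
proof (intro allI impI)
  fix w assume wb: "\<forall>i<d. \<bar>w i\<bar> \<le> K / real d"
  define a where "a = K / real d"
  define h where "h = K / (real d * real N)"
  have dpos: "real d > 0" using d by simp
  have Npos: "real N > 0" using N by simp
  have Kpos: "K > 0" using K by simp
  have a0: "a > 0" unfolding a_def using dpos Kpos by simp
  have ah: "a * h = a^2 / real N" unfolding a_def h_def by (simp add: power2_eq_square field_simps)
  define C where "C = real (card (Om d \<Omega>))"
  define k0 where "k0 = replicate d (int N)"
  have k0K: "k0 \<in> Ks d N" unfolding k0_def Ks_def by auto
  have g0: "gv d K N k0 i = a" if "i < d" for i
    unfolding gv_def k0_def a_def using that Npos by simp
  have Qg0: "Qf d \<Omega> (gv d K N k0) = C * a^2"
  proof -
    have "Qf d \<Omega> (gv d K N k0) = (\<Sum>e\<in>Om d \<Omega>. a * a)" unfolding Qf_def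
      by (rule sum.cong[OF refl]) (auto simp: Om_def g0)
    thus ?thesis unfolding C_def by (simp add: power2_eq_square)
  qed
  have Sg0: "(\<Sum>i<d. gv d K N k0 i) = K" using g0 dpos unfolding a_def by simp
  have "\<not> (\<eta>*p/2 < \<bar>C * a^2 - p*K\<^sup>2\<bar>)" using nb k0K Qg0 Sg0 by metis
  hence "C * a^2 \<le> p*K\<^sup>2 + \<eta>*p/2" by linarith
  moreover have "\<eta>*p/2 \<le> p * K^2"
  proof -
    have "1 \<le> K^2" using K by (simp add: one_le_power)
    hence "\<eta> / 2 \<le> K^2" using e by linarith
    hence "p * (\<eta>/2) \<le> p * K^2" using p by (intro mult_left_mono) auto
    thus ?thesis by (simp add: mult.commute)
  qed
  ultimately have Cb: "C * a^2 \<le> 2 * p * K^2" by linarith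
  define ks where "ks = map (\<lambda>i. \<lfloor>w i * (real d * real N) / K\<rfloor>) [0..<d]"
  have ksi: "ks ! i = \<lfloor>w i * (real d * real N) / K\<rfloor>" if "i < d" for i unfolding ks_def using that by simp
  have ybd: "\<bar>w i * (real d * real N) / K\<bar> \<le> real N" if "i < d" for i
  proof -
    have "\<bar>w i * (real d * real N) / K\<bar> = \<bar>w i\<bar> * (real d * real N) / K" using dpos Npos Kpos by (simp add: abs_mult)
    also have "\<dots> \<le> (K / real d) * (real d * real N) / K" using wb that dpos Npos Kpos
      by (intro divide_right_mono mult_right_mono) auto
    also have "\<dots> = real N" using dpos Kpos by simp
    finally show ?thesis .
  qed
  have ksK: "ks \<in> Ks d N"
  proof -
    have "\<forall>x\<in>set ks. - int N \<le> x \<and> x \<le> int N"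
    proof
      fix x assume "x \<in> set ks"
      then obtain i where i: "i < d" "x = \<lfloor>w i * (real d * real N) / K\<rfloor>" unfolding ks_def by auto
      have "- real N \<le> w i * (real d * real N) / K" "w i * (real d * real N) / K \<le> real N" using absD[OF ybd[OF i(1)]] by auto
      hence "- int N \<le> x" "x \<le> int N" unfolding i(2) by (simp_all add: le_floor_iff floor_le_iff)
      thus "- int N \<le> x \<and> x \<le> int N" by simp
    qed
    thus ?thesis unfolding Ks_def ks_def by auto
  qed
  define g where "g = gv d K N ks"
  have wg: "\<bar>w i - g i\<bar> \<le> h" and gb: "\<bar>g i\<bar> \<le> a" if "i < d" for i
  proof -
    define y where "y = w i * (real d * real N) / K"
    have gi: "g i = K * real_of_int \<lfloor>y\<rfloor> / (real d * real N)" unfolding g_def gv_def y_def ksi[OF that] ..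
    have wi: "w i = K * y / (real d * real N)" unfolding y_def using dpos Npos Kpos by simp
    have fl: "real_of_int \<lfloor>y\<rfloor> \<le> y" "y < real_of_int \<lfloor>y\<rfloor> + 1" by linarith+
    have "w i - g i = (K / (real d * real N)) * (y - real_of_int \<lfloor>y\<rfloor>)" unfolding wi gi using dpos Npos by (simp add: field_simps)
    moreover have "0 \<le> y - real_of_int \<lfloor>y\<rfloor>" "y - real_of_int \<lfloor>y\<rfloor> \<le> 1" using fl by linarith+
    moreover have "K / (real d * real N) > 0" using dpos Npos Kpos by simp
    ultimately show "\<bar>w i - g i\<bar> \<le> h" unfolding h_def
    proof -
      assume A: "w i - g i = (K / (real d * real N)) * (y - real_of_int \<lfloor>y\<rfloor>)"
        and B: "0 \<le> y - real_of_int \<lfloor>y\<rfloor>" "y - real_of_int \<lfloor>y\<rfloor> \<le> 1" and C: "K / (real d * real N) > 0"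
      have "\<bar>w i - g i\<bar> = (K / (real d * real N)) * (y - real_of_int \<lfloor>y\<rfloor>)" unfolding A using B C Kpos by (simp add: abs_mult)
      also have "\<dots> \<le> (K / (real d * real N)) * 1" using B C by (intro mult_left_mono) auto
      finally show "\<bar>w i - g i\<bar> \<le> K / (real d * real N)" by simp
    qed
    have "\<bar>real_of_int \<lfloor>y\<rfloor>\<bar> \<le> real N" using ybd[OF that] fl unfolding y_def[symmetric]
    proof -
      have "- real N \<le> y" "y \<le> real N" using absD[OF ybd[OF that]] unfolding y_def by auto
      hence i1: "- int N \<le> \<lfloor>y\<rfloor>" by (simp add: le_floor_iff)
      have i2: "\<lfloor>y\<rfloor> \<le> int N" using \<open>y \<le> real N\<close> by (simp add: floor_le_iff)
      have "- real N \<le> real_of_int \<lfloor>y\<rfloor>" using i1 by (metis of_int_le_iff of_int_minus of_int_of_nat_eq)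
      moreover have "real_of_int \<lfloor>y\<rfloor> \<le> real N" using i2 by (metis of_int_le_iff of_int_of_nat_eq)
      ultimately have "- real N \<le> real_of_int \<lfloor>y\<rfloor>" "real_of_int \<lfloor>y\<rfloor> \<le> real N" by auto
      thus ?thesis by simp
    qed
    hence "K * \<bar>real_of_int \<lfloor>y\<rfloor>\<bar> \<le> K * real N" using Kpos by (intro mult_left_mono) auto
    hence "K * \<bar>real_of_int \<lfloor>y\<rfloor>\<bar> / (real d * real N) \<le> K * real N / (real d * real N)"
      using dpos Npos by (intro divide_right_mono) auto
    hence "\<bar>g i\<bar> \<le> K * real N / (real d * real N)" unfolding gi using dpos Npos Kpos
      by (simp add: abs_mult)
    thus "\<bar>g i\<bar> \<le> a" unfolding a_def using Npos by simp
  qed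
  have Qd: "\<bar>Qf d \<Omega> w - Qf d \<Omega> g\<bar> \<le> C * (2 * a * h)"
  proof -
    have "Qf d \<Omega> w - Qf d \<Omega> g = (\<Sum>e\<in>Om d \<Omega>. w (fst e) * w (snd e) - g (fst e) * g (snd e))"
      unfolding Qf_def case_prod_unfold by (simp add: sum_subtractf)
    also have "\<bar>\<dots>\<bar> \<le> (\<Sum>e\<in>Om d \<Omega>. \<bar>w (fst e) * w (snd e) - g (fst e) * g (snd e)\<bar>)" by (rule sum_abs)
    also have "\<dots> \<le> (\<Sum>e\<in>Om d \<Omega>. 2 * a * h)"
    proof (rule sum_mono)
      fix e assume "e \<in> Om d \<Omega>"
      hence i: "fst e < d" "snd e < d" unfolding Om_def by auto
      have "w (fst e) * w (snd e) - g (fst e) * g (snd e) = w (fst e) * (w (snd e) - g (snd e)) + g (snd e) * (w (fst e) - g (fst e))"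
        by (simp add: algebra_simps)
      also have "\<bar>\<dots>\<bar> \<le> \<bar>w (fst e)\<bar> * \<bar>w (snd e) - g (snd e)\<bar> + \<bar>g (snd e)\<bar> * \<bar>w (fst e) - g (fst e)\<bar>"
        by (metis abs_mult abs_triangle_ineq)
      also have "\<dots> \<le> a * h + a * h"
        using wb i wg[OF i(1)] wg[OF i(2)] gb[OF i(2)] unfolding a_def
        by (intro add_mono mult_mono) auto
      finally show "\<bar>w (fst e) * w (snd e) - g (fst e) * g (snd e)\<bar> \<le> 2 * a * h" by simp
    qed
    also have "\<dots> = C * (2 * a * h)" unfolding C_def by simp
    finally show ?thesis .
  qed
  have Cah: "C * (2 * a * h) \<le> 4 * p * K^2 / real N"
  proof -
    have "C * (2 * a * h) = 2 * C * (a * h)" by (simp add: algebra_simps)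
    also have "\<dots> = 2 * (C * a^2) / real N" unfolding ah by simp
    finally have "C * (2 * a * h) = 2 * (C * a^2) / real N" .
    also have "\<dots> \<le> 2 * (2 * p * K^2) / real N" using Cb Npos by (intro divide_right_mono) auto
    finally show ?thesis by simp
  qed
  have S1: "\<bar>(\<Sum>i<d. w i) - (\<Sum>i<d. g i)\<bar> \<le> K / real N"
  proof -
    have "\<bar>(\<Sum>i<d. w i) - (\<Sum>i<d. g i)\<bar> \<le> (\<Sum>i<d. \<bar>w i - g i\<bar>)" by (simp add: sum_subtractf[symmetric] sum_abs)
    also have "\<dots> \<le> (\<Sum>i<d. h)" using wg by (intro sum_mono) auto
    also have "\<dots> = K / real N" unfolding h_def using dpos by simp
    finally show ?thesis .
  qed
  have S2: "\<bar>(\<Sum>i<d. w i) + (\<Sum>i<d. g i)\<bar> \<le> 2 * K"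
  proof -
    have "\<bar>(\<Sum>i<d. w i) + (\<Sum>i<d. g i)\<bar> = \<bar>\<Sum>i<d. w i + g i\<bar>" by (simp add: sum.distrib)
    also have "\<dots> \<le> (\<Sum>i<d. \<bar>w i + g i\<bar>)" by (rule sum_abs)
    also have "\<dots> \<le> (\<Sum>i<d. 2 * a)"
    proof (rule sum_mono)
      fix i assume "i \<in> {..<d}"
      hence i: "i < d" by simp
      have "\<bar>w i + g i\<bar> \<le> \<bar>w i\<bar> + \<bar>g i\<bar>" by (rule abs_triangle_ineq)
      thus "\<bar>w i + g i\<bar> \<le> 2 * a" using wb i gb[OF i] unfolding a_def by auto
    qed
    also have "\<dots> = 2 * K" unfolding a_def using dpos by simp
    finally show ?thesis .
  qed
  have Sd: "\<bar>p*(\<Sum>i<d. w i)\<^sup>2 - p*(\<Sum>i<d. g i)\<^sup>2\<bar> \<le> 2 * p * K^2 / real N"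
  proof -
    have "p*(\<Sum>i<d. w i)\<^sup>2 - p*(\<Sum>i<d. g i)\<^sup>2 = p * (((\<Sum>i<d. w i) - (\<Sum>i<d. g i)) * ((\<Sum>i<d. w i) + (\<Sum>i<d. g i)))"
      by (simp add: power2_eq_square algebra_simps)
    also have "\<bar>\<dots>\<bar> = p * (\<bar>(\<Sum>i<d. w i) - (\<Sum>i<d. g i)\<bar> * \<bar>(\<Sum>i<d. w i) + (\<Sum>i<d. g i)\<bar>)"
      using p by (simp add: abs_mult)
    also have "\<dots> \<le> p * ((K / real N) * (2 * K))" using S1 S2 p by (intro mult_left_mono mult_mono) auto
    finally show ?thesis by (simp add: power2_eq_square mult.assoc mult.left_commute)
  qed
  have gg: "\<bar>Qf d \<Omega> g - p*(\<Sum>i<d. g i)\<^sup>2\<bar> \<le> \<eta>*p/2" using nb ksK unfolding g_def by auto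
  have fin: "6 * p * K^2 / real N \<le> \<eta>*p/2"
  proof -
    have "12 * K^2 \<le> \<eta> * real N" using N(2) e by (simp add: divide_le_eq mult.commute)
    hence "6 * K^2 / real N \<le> \<eta> / 2" using Npos by (simp add: divide_le_eq)
    hence "p * (6 * K^2 / real N) \<le> p * (\<eta> / 2)" using p by (intro mult_left_mono) auto
    thus ?thesis by (simp add: mult.commute)
  qed
  have "\<bar>Qf d \<Omega> w - p*(\<Sum>i<d. w i)\<^sup>2\<bar> \<le> \<bar>Qf d \<Omega> w - Qf d \<Omega> g\<bar> + \<bar>Qf d \<Omega> g - p*(\<Sum>i<d. g i)\<^sup>2\<bar>
      + \<bar>p*(\<Sum>i<d. w i)\<^sup>2 - p*(\<Sum>i<d. g i)\<^sup>2\<bar>" by linarith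
  also have "\<dots> \<le> 4 * p * K^2 / real N + \<eta>*p/2 + 2 * p * K^2 / real N" using Qd Cah gg Sd by linarith
  also have "\<dots> = 6 * p * K^2 / real N + \<eta>*p/2" by (simp add: field_simps)
  also have "\<dots> \<le> \<eta>*p" using fin by linarith
  finally show "\<bar>Qf d \<Omega> w - p*(\<Sum>i<d. w i)\<^sup>2\<bar> \<le> \<eta>*p" .
qed




lemma gv_bound:
  assumes "ks \<in> Ks d N" "i < d" "0 < N" "0 < d" "0 \<le> K"
  shows "\<bar>gv d K N ks i\<bar> \<le> K / real d"
proof -
  have "ks ! i \<in> set ks" using assms(1,2) unfolding Ks_def by auto
  hence "ks ! i \<in> {- int N..int N}" using assms(1) unfolding Ks_def by auto
  hence k: "\<bar>ks ! i\<bar> \<le> int N" by (simp add: abs_le_iff)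
  hence "\<bar>real_of_int (ks ! i)\<bar> \<le> real N" by (metis of_int_abs of_int_le_iff of_int_of_nat_eq)
  hence "K * \<bar>real_of_int (ks ! i)\<bar> \<le> K * real N" using assms(5) by (intro mult_left_mono) auto
  hence "K * \<bar>real_of_int (ks ! i)\<bar> / (real d * real N) \<le> K * real N / (real d * real N)"
    by (intro divide_right_mono) auto
  thus ?thesis unfolding gv_def using assms by (simp add: abs_mult)
qed



theorem main_with:
  assumes lim: "\<And>c::real. c > 0 \<Longrightarrow> (\<lambda>d::nat. 2 * exp (real d * (ln c - ln (real d)))) \<longlonglongrightarrow> 0"
  shows "\<exists>P. is_poly2 P \<and> (\<exists>c0>0. \<exists>C>0. \<forall>(\<mu>::real) (\<epsilon>::real).
    0 < \<epsilon> \<and> \<epsilon> \<le> c0 \<longrightarrow>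
    (\<exists>\<delta>::nat \<Rightarrow> real. \<delta> \<longlonglongrightarrow> 0 \<and>
      (\<forall>(d::nat) (p::real) (z::nat \<Rightarrow> real).
         0 < d \<and> 0 \<le> p \<and> p \<le> 1 \<and>
         p \<ge> P \<mu> (ln (real d)) / (real d * \<epsilon>\<^sup>2) \<and>
         l2norm d z = 1 \<and> (\<forall>i<d. \<bar>z i\<bar> \<le> \<mu> / sqrt (real d)) \<longrightarrow>
         omega_prob d p (\<lambda>\<Omega>. \<forall>x.
             local_min_d d (mc_obj d \<Omega> z) x \<and>
             (\<forall>i<d. \<bar>x i\<bar> < 2 * \<mu> / sqrt (real d)) \<longrightarrow>
             min (l2norm d (\<lambda>i. x i - z i)) (l2norm d (\<lambda>i. x i + z i)) \<le> C * sqrt \<epsilon>)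
         \<ge> 1 - \<delta> d)))"
proof -
  define P :: "real \<Rightarrow> real \<Rightarrow> real" where "P = (\<lambda>a b. 262144 * a^8 * b)"
  have polyP: "is_poly2 P"
    unfolding is_poly2_def P_def
  proof (intro exI allI)
    fix a b :: real
    show "262144 * a^8 * b = (\<Sum>i\<le>8. \<Sum>j\<le>8. (\<lambda>i j. if i = 8 \<and> j = 1 then 262144 else 0) i j * a ^ i * b ^ j)"
    proof -
      have t: "(if i = 8 \<and> j = 1 then 262144 else 0) * a ^ i * b ^ j =
          (if i = 8 then (if j = 1 then 262144 * a^8 * b else 0) else (0::real))" for i j :: nat
        by auto
      have "(\<Sum>i\<le>8. \<Sum>j\<le>8. (\<lambda>i j. if i = 8 \<and> j = 1 then 262144 else 0) i j * a ^ i * b ^ j)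
        = (\<Sum>i\<le>(8::nat). \<Sum>j\<le>(8::nat). if i = 8 then (if j = 1 then 262144 * a^8 * b else 0) else 0)"
        by (simp only: t)
      also have "\<dots> = (\<Sum>i\<le>(8::nat). if i = 8 then (\<Sum>j\<le>(8::nat). if j = 1 then 262144 * a^8 * b else 0) else 0)"
        by (rule sum.cong[OF refl]) simp
      also have "\<dots> = 262144 * a^8 * b" by simp
      finally show ?thesis by simp
    qed
  qed
  have main: "\<exists>\<delta>::nat \<Rightarrow> real. \<delta> \<longlonglongrightarrow> 0 \<and>
      (\<forall>(d::nat) (p::real) (z::nat \<Rightarrow> real).
         0 < d \<and> 0 \<le> p \<and> p \<le> 1 \<and>
         p \<ge> P \<mu> (ln (real d)) / (real d * \<epsilon>\<^sup>2) \<and>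
         l2norm d z = 1 \<and> (\<forall>i<d. \<bar>z i\<bar> \<le> \<mu> / sqrt (real d)) \<longrightarrow>
         omega_prob d p (\<lambda>\<Omega>. \<forall>x.
             local_min_d d (mc_obj d \<Omega> z) x \<and>
             (\<forall>i<d. \<bar>x i\<bar> < 2 * \<mu> / sqrt (real d)) \<longrightarrow>
             min (l2norm d (\<lambda>i. x i - z i)) (l2norm d (\<lambda>i. x i + z i)) \<le> 5 * sqrt \<epsilon>)
         \<ge> 1 - \<delta> d)"
    if eps: "0 < \<epsilon>" "\<epsilon> \<le> 1/100" for \<mu> \<epsilon> :: real
  proof -
    define K where "K = 8 * \<mu>^2"
    define N where "N = nat \<lceil>12 * K^2 / \<epsilon>\<rceil>"
    define c where "c = real (2*N+1)"
    define \<delta> where "\<delta> d = 2 * exp (real d * (ln c - ln (real d)))" for d :: nat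
    have c1: "c \<ge> 1" unfolding c_def by simp
    have dl: "\<delta> \<longlonglongrightarrow> 0" unfolding \<delta>_def using lim c1 by simp
    show ?thesis
    proof (rule exI[of _ \<delta>], intro conjI dl allI impI)
      fix d :: nat and p :: real and z :: "nat \<Rightarrow> real"
      assume H: "0 < d \<and> 0 \<le> p \<and> p \<le> 1 \<and> p \<ge> P \<mu> (ln (real d)) / (real d * \<epsilon>\<^sup>2) \<and>
         l2norm d z = 1 \<and> (\<forall>i<d. \<bar>z i\<bar> \<le> \<mu> / sqrt (real d))"
      hence d: "0 < d" and p0: "0 \<le> p" and p1: "p \<le> 1" and pP: "p \<ge> P \<mu> (ln (real d)) / (real d * \<epsilon>\<^sup>2)"
        and zn: "l2norm d z = 1" and zb: "\<forall>i<d. \<bar>z i\<bar> \<le> \<mu> / sqrt (real d)" by auto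
      define E where "E = (\<lambda>\<Omega>. \<forall>x.
             local_min_d d (mc_obj d \<Omega> z) x \<and>
             (\<forall>i<d. \<bar>x i\<bar> < 2 * \<mu> / sqrt (real d)) \<longrightarrow>
             min (l2norm d (\<lambda>i. x i - z i)) (l2norm d (\<lambda>i. x i + z i)) \<le> 5 * sqrt \<epsilon>)"
      show "omega_prob d p E \<ge> 1 - \<delta> d"
      proof (cases "\<delta> d \<ge> 1")
        case True
        thus ?thesis using omega_nonneg[OF p0 p1, of d E] by linarith
      next
        case False
        have dpos: "real d > 0" using d by simp
        have lnd: "ln c < ln (real d)"
        proof (rule ccontr)
          assume "\<not> ln c < ln (real d)"
          hence "real d * (ln c - ln (real d)) \<ge> 0" using dpos by simp
          hence "exp (real d * (ln c - ln (real d))) \<ge> 1" by simp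
          thus False using False unfolding \<delta>_def by linarith
        qed
        have lnc: "ln c \<ge> 0" using c1 by simp
        have lnpos: "ln (real d) > 0" using lnd lnc by simp
        have z1: "(\<Sum>i<d. (z i)\<^sup>2) = 1" using zn unfolding l2norm_def by simp
        have mu0: "0 \<le> \<mu>"
        proof -
          have "0 \<le> \<mu> / sqrt (real d)" using zb d by (meson abs_ge_zero order_trans)
          thus ?thesis using dpos by (simp add: zero_le_divide_iff)
        qed
        have mu1: "1 \<le> \<mu>"
        proof -
          have "(\<Sum>i<d. (z i)\<^sup>2) \<le> (\<Sum>i<d. (\<mu> / sqrt (real d))\<^sup>2)"
          proof (rule sum_mono)
            fix i assume "i \<in> {..<d}"
            hence "\<bar>z i\<bar> \<le> \<mu> / sqrt (real d)" using zb by auto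
            thus "(z i)\<^sup>2 \<le> (\<mu> / sqrt (real d))\<^sup>2" by (metis abs_ge_zero order_trans power2_abs power_mono)
          qed
          also have "\<dots> = \<mu>^2" using dpos by (simp add: power_divide)
          finally have "1 \<le> \<mu>^2" using z1 by simp
          show ?thesis
          proof (rule ccontr)
            assume "\<not> 1 \<le> \<mu>"
            hence "\<mu> * \<mu> \<le> 1 * \<mu>" using mu0 by (intro mult_right_mono) auto
            thus False using \<open>1 \<le> \<mu>^2\<close> \<open>\<not> 1 \<le> \<mu>\<close> by (simp add: power2_eq_square)
          qed
        qed
        have "1 \<le> \<mu>^2" using mu1 by (simp add: one_le_power)
        hence K1: "1 \<le> K" unfolding K_def by linarith
        have Kpos: "K > 0" using K1 by simp
        have PK: "P \<mu> (ln (real d)) = 64 * K^4 * ln (real d)" unfolding P_def K_def by (simp add: power_mult_distrib power_mult[symmetric])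
        have pd: "64 * K^4 * ln (real d) \<le> p * (real d * \<epsilon>\<^sup>2)"
          using pP unfolding PK using dpos eps by (simp add: divide_le_eq)
        have ppos: "p > 0"
        proof -
          have "0 < 64 * K^4 * ln (real d)" using Kpos lnpos by simp
          hence "0 < p * (real d * \<epsilon>\<^sup>2)" using pd by linarith
          thus ?thesis using p0 by (cases "p = 0") auto
        qed
        have expo: "real d * ln (real d) \<le> \<epsilon>^2 * p * (real d)^2 / (64 * K^4)"
        proof -
          have "real d * (64 * K^4 * ln (real d)) \<le> real d * (p * (real d * \<epsilon>\<^sup>2))"
            using pd dpos by (intro mult_left_mono) auto
          thus ?thesis using Kpos by (simp add: field_simps power2_eq_square)
        qed
        have Npos: "0 < N"
        proof -
          have "0 < 12 * K^2 / \<epsilon>" using Kpos eps by simp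
          thus ?thesis unfolding N_def by simp
        qed
        have NK: "12 * K^2 / \<epsilon> \<le> real N" unfolding N_def by (rule real_nat_ceiling_ge)
        define B where "B ks \<Omega> = (\<epsilon>*p/2 < \<bar>Qf d \<Omega> (gv d K N ks) - p*(\<Sum>i<d. gv d K N ks i)\<^sup>2\<bar>)" for ks \<Omega>
        have imp: "E \<Omega>" if nb: "\<forall>ks\<in>Ks d N. \<not> B ks \<Omega>" for \<Omega>
        proof -
          have good: "\<forall>w. (\<forall>i<d. \<bar>w i\<bar> \<le> K / real d) \<longrightarrow> \<bar>Qf d \<Omega> w - p*(\<Sum>i<d. w i)\<^sup>2\<bar> \<le> \<epsilon>*p"
            by (rule good_from_grid[OF d ppos K1 eps(1) _ Npos NK]) (use eps nb in \<open>auto simp: B_def\<close>)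
          have good': "\<forall>w. (\<forall>i<d. \<bar>w i\<bar> \<le> 8*\<mu>\<^sup>2/real d) \<longrightarrow> \<bar>Qf d \<Omega> w - p*(\<Sum>i<d. w i)\<^sup>2\<bar> \<le> \<epsilon>*p"
            using good unfolding K_def .
          have s20: "sqrt (20*\<epsilon>) \<le> 5 * sqrt \<epsilon>"
          proof -
            have "sqrt (20::real) \<le> sqrt (5^2)" by (rule real_sqrt_le_mono) simp
            hence "sqrt (20::real) \<le> 5" by (simp only: real_sqrt_abs)
            thus ?thesis unfolding real_sqrt_mult by (rule mult_right_mono) (use eps in simp)
          qed
          show ?thesis unfolding E_def
          proof (intro allI impI)
            fix x assume "local_min_d d (mc_obj d \<Omega> z) x \<and> (\<forall>i<d. \<bar>x i\<bar> < 2 * \<mu> / sqrt (real d))"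
            hence lm: "local_min_d d (mc_obj d \<Omega> z) x" and xb: "\<forall>i<d. \<bar>x i\<bar> < 2 * \<mu> / sqrt (real d)" by auto
            have "min (l2norm d (\<lambda>i. x i - z i)) (l2norm d (\<lambda>i. x i + z i)) \<le> sqrt (20*\<epsilon>)"
              by (rule det_main[OF d ppos _ eps(2) good' z1 zb lm xb]) (use eps in simp)
            thus "min (l2norm d (\<lambda>i. x i - z i)) (l2norm d (\<lambda>i. x i + z i)) \<le> 5 * sqrt \<epsilon>" using s20 by linarith
          qed
        qed
        have ub: "omega_prob d p E \<ge> 1 - (\<Sum>ks\<in>Ks d N. omega_prob d p (B ks))"
          by (rule union_bound[OF Ks_fin p0 p1]) (use imp in blast)
        have each: "omega_prob d p (B ks) \<le> 2 * exp (- (real d * ln (real d)))" if "ks \<in> Ks d N" for ks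
        proof -
          have "omega_prob d p (B ks) \<le> 2 * exp (- (\<epsilon>^2 * p * (real d)^2 / (64 * K^4)))"
            unfolding B_def
            by (rule bad_bound[OF d ppos p1 K1 eps(1)]) (use eps gv_bound[OF that _ Npos d] Kpos in auto)
          also have "\<dots> \<le> 2 * exp (- (real d * ln (real d)))" using expo by simp
          finally show ?thesis .
        qed
        have "(\<Sum>ks\<in>Ks d N. omega_prob d p (B ks)) \<le> (\<Sum>ks\<in>Ks d N. 2 * exp (- (real d * ln (real d))))"
          by (rule sum_mono) (rule each)
        also have "\<dots> = real ((2*N+1)^d) * (2 * exp (- (real d * ln (real d))))" by (simp add: Ks_card)
        also have "\<dots> = \<delta> d"
        proof -
          have "real ((2*N+1)^d) = exp (real d * ln c)" unfolding c_def
            by (simp add: exp_of_nat_mult)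
          thus ?thesis unfolding \<delta>_def by (simp add: exp_add[symmetric] algebra_simps)
        qed
        finally show ?thesis using ub unfolding E_def by linarith
      qed
    qed
  qed
  show ?thesis
    apply (rule exI[of _ P])
    apply (rule conjI[OF polyP])
    apply (rule exI[of _ "1/100"])
    apply (rule conjI, simp)
    apply (rule exI[of _ 5])
    apply (rule conjI, simp)
    apply (intro allI impI)
    apply (erule conjE)
    apply (rule main)
     apply assumption+
    done
qed


lemma lim_delta: "(c::real) > 0 \<Longrightarrow> (\<lambda>d::nat. 2 * exp (real d * (ln c - ln (real d)))) \<longlonglongrightarrow> 0"
  by real_asymp

theorem theorem4p2:
  shows "\<exists>P. is_poly2 P \<and> (\<exists>c0>0. \<exists>C>0. \<forall>(\<mu>::real) (\<epsilon>::real).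
    0 < \<epsilon> \<and> \<epsilon> \<le> c0 \<longrightarrow>
    (\<exists>\<delta>::nat \<Rightarrow> real. \<delta> \<longlonglongrightarrow> 0 \<and>
      (\<forall>(d::nat) (p::real) (z::nat \<Rightarrow> real).
         0 < d \<and> 0 \<le> p \<and> p \<le> 1 \<and>
         p \<ge> P \<mu> (ln (real d)) / (real d * \<epsilon>\<^sup>2) \<and>
         l2norm d z = 1 \<and> (\<forall>i<d. \<bar>z i\<bar> \<le> \<mu> / sqrt (real d)) \<longrightarrow>
         omega_prob d p (\<lambda>\<Omega>. \<forall>x.
             local_min_d d (mc_obj d \<Omega> z) x \<and>
             (\<forall>i<d. \<bar>x i\<bar> < 2 * \<mu> / sqrt (real d)) \<longrightarrow>
             min (l2norm d (\<lambda>i. x i - z i)) (l2norm d (\<lambda>i. x i + z i)) \<le> C * sqrt \<epsilon>)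
         \<ge> 1 - \<delta> d)))"
  by (rule main_with[OF lim_delta])

end
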